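(* Let $G=SL(2,\mathbb{C})$ and let $B_1,B_2\in G$ satisfy $\mathsf{tr}([B_1,B_2])\neq 2$ (where $[B_1,B_2]=B_1B_2B_1^{-1}B_2^{-1}$). Then there exists $g\in G$ such that $A_j:=gB_jg^{-1}$, $j=1,2$, satisfy $A_j^T=A_j$. Let $n\ge 3$ and $\mathbf{r}=(t_1,t_2,t_{12})=(\mathsf{tr}A_1,\mathsf{tr}A_2,\mathsf{tr}(A_1A_2))$. Then for any $\mathbf{s}\in\mathbb{C}^{3n-6}$ there exist $A_3,\dots,A_n\in SL(2,\mathbb{C})$ such that $T_n(A_1,\dots,A_n)=(\mathbf{r},\mathbf{s})$. Moreover, given any $A=(A_1,\dots,A_n)\in G^{\times n}$ with $T_n(A)=(\mathbf{r},\mathbf{s})$, $\mathsf{tr}([A_1,A_2])\neq 2$, $A_1^T=A_1$ and $A_2^T=A_2$, the preimage $T_n^{-1}(\mathbf{r},\mathbf{s})$ consists of the $G$-orbits (under simultaneous conjugation) of the points of the finite set $\{(A_1,A_2,C_3,\dots,C_n): C_j=A_j \text{ or } C_j=A_j^T \text{ for } j=3,\dots,n\}$.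
   Context: $T$ denotes transposition. The Magnus trace map $T_n:G^{\times n}\to\mathbb{C}^{3n-3}$ is $T_n(A_1,\dots,A_n)=(t_1,t_2,t_{12},t_3,t_{13},t_{23},\dots,t_k,t_{1k},t_{2k},\dots,t_n,t_{1n},t_{2n})$, where $t_j=\mathsf{tr}(A_j)$ and $t_{jk}=\mathsf{tr}(A_jA_k)$. $G$ acts on $G^{\times n}$ by $g\cdot(A_1,\dots,A_n)=(gA_1g^{-1},\dots,gA_ng^{-1})$. *)

theory Defs
  imports "HOL-Analysis.Analysis"
begin

type_synonym mat2 = "complex^2^2"

definition SL2 :: "mat2 set" where
  "SL2 = {A. det A = 1}"

definition commutator :: "mat2 \<Rightarrow> mat2 \<Rightarrow> mat2" where
  "commutator X Y = X ** Y ** matrix_inv X ** matrix_inv Y"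

definition conj :: "mat2 \<Rightarrow> mat2 \<Rightarrow> mat2" where
  "conj g X = g ** X ** matrix_inv g"

text \<open>Tuples (A_1,...,A_n) are lists of length n; A_j is the list entry at index j-1.
  The Magnus trace map T_n, with values in C^(3n-3) represented as a list of length 3n-3.\<close>
definition magnus_trace :: "mat2 list \<Rightarrow> complex list" where
  "magnus_trace A =
     [trace (A!0), trace (A!1), trace (A!0 ** A!1)] @
     concat (map (\<lambda>k. [trace (A!k), trace (A!0 ** A!k), trace (A!1 ** A!k)]) [2..<length A])"

definition conj_tuple :: "mat2 \<Rightarrow> mat2 list \<Rightarrow> mat2 list" where
  "conj_tuple g A = map (conj g) A"

definition tuples :: "nat \<Rightarrow> mat2 list set" where
  "tuples n = {A. length A = n \<and> set A \<subseteq> SL2}"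

end

theory Submission
  imports Defs
begin


definition mk :: "complex \<Rightarrow> complex \<Rightarrow> complex \<Rightarrow> complex \<Rightarrow> mat2" where
  "mk a b c d = (\<chi> i j. if i = 1 then (if j = 1 then a else b) else (if j = 1 then c else d))"

lemma mk_nth: "mk a b c d $ 1 $ 1 = a" "mk a b c d $ 1 $ 2 = b" "mk a b c d $ 2 $ 1 = c" "mk a b c d $ 2 $ 2 = d"
  by (simp_all add: mk_def)

lemma mat2_mk: "(A::mat2) = mk (A$1$1) (A$1$2) (A$2$1) (A$2$2)"
  unfolding mk_def by (simp add: vec_eq_iff forall_2)

lemma mat2_cases: obtains a b c d where "(A::mat2) = mk a b c d"
  using mat2_mk by blast

lemma mk_eq: "mk a b c d = mk a' b' c' d' \<longleftrightarrow> a = a' \<and> b = b' \<and> c = c' \<and> d = d'"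
  by (metis mk_nth)

lemma mk_mult: "mk a b c d ** mk e f g h = mk (a*e+b*g) (a*f+b*h) (c*e+d*g) (c*f+d*h)"
  by (subst mat2_mk) (simp add: matrix_matrix_mult_def sum_2 mk_nth)

lemma mk_det: "det (mk a b c d) = a*d - b*c"
  by (simp add: det_2 mk_nth)

lemma mk_trace: "trace (mk a b c d) = a + d"
  by (simp add: trace_def sum_2 mk_nth)

lemma mk_transpose: "transpose (mk a b c d) = mk a c b d"
  by (subst mat2_mk) (simp add: transpose_def mk_nth)

lemma mk_one: "mat 1 = mk 1 0 0 1"
  by (subst mat2_mk) (simp add: mat_def)

lemma mk_add: "mk a b c d + mk e f g h = mk (a+e) (b+f) (c+g) (d+h)"
  by (subst mat2_mk) (simp add: mk_nth)

lemma mk_diff: "mk a b c d - mk e f g h = mk (a-e) (b-f) (c-g) (d-h)"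
  by (subst mat2_mk) (simp add: mk_nth)


lemma mk_inv: assumes "a*d - b*c = 1" shows "matrix_inv (mk a b c d) = mk d (-b) (-c) a"
proof -
  let ?A = "mk a b c d" and ?B = "mk d (-b) (-c) a"
  have 1: "?A ** ?B = mat 1" "?B ** ?A = mat 1" using assms
    by (simp_all add: mk_mult mk_one mk_eq algebra_simps)
  hence "\<exists>A'. ?A ** A' = mat 1 \<and> A' ** ?A = mat 1" by blast
  hence 2: "?A ** matrix_inv ?A = mat 1 \<and> matrix_inv ?A ** ?A = mat 1"
    unfolding matrix_inv_def by (rule someI_ex)
  have "matrix_inv ?A = matrix_inv ?A ** (?A ** ?B)" using 1 by simp
  also have "\<dots> = ?B" using 2 by (simp add: matrix_mul_assoc)
  finally show ?thesis .
qed

lemma SL2_iff: "A \<in> SL2 \<longleftrightarrow> det A = 1" by (simp add: SL2_def)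

lemma SL2_inv: assumes "g \<in> SL2"
  shows "g ** matrix_inv g = mat 1" "matrix_inv g ** g = mat 1" "matrix_inv g \<in> SL2"
proof -
  obtain a b c d where g: "g = mk a b c d" by (rule mat2_cases)
  have d: "a*d - b*c = 1" using assms g by (simp add: SL2_iff mk_det)
  show "g ** matrix_inv g = mat 1" "matrix_inv g ** g = mat 1" "matrix_inv g \<in> SL2"
    using d by (simp_all add: g mk_inv mk_mult mk_one mk_eq SL2_iff mk_det algebra_simps)
qed

lemma conj_mult: assumes "g \<in> SL2" shows "conj g X ** conj g Y = conj g (X ** Y)"
proof -
  have "conj g X ** conj g Y = g ** X ** (matrix_inv g ** g) ** Y ** matrix_inv g"
    unfolding conj_def by (simp add: matrix_mul_assoc)
  thus ?thesis using SL2_inv[OF assms] by (simp add: conj_def matrix_mul_assoc)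
qed

lemma conj_trace: assumes "g \<in> SL2" shows "trace (conj g X) = trace X"
proof -
  have "trace (conj g X) = trace ((X ** matrix_inv g) ** g)"
    unfolding conj_def by (metis matrix_mul_assoc trace_mul_sym)
  thus ?thesis using SL2_inv[OF assms] by (simp add: matrix_mul_assoc[symmetric])
qed

lemma conj_det: assumes "g \<in> SL2" shows "det (conj g X) = det X"
proof -
  have "det (conj g X) = det X * (det (matrix_inv g) * det g)"
    unfolding conj_def by (simp add: det_mul)
  also have "det (matrix_inv g) * det g = 1"
    using SL2_inv[OF assms] by (metis det_I det_mul)
  finally show ?thesis by simp
qed

lemma conj_SL2: "g \<in> SL2 \<Longrightarrow> X \<in> SL2 \<Longrightarrow> conj g X \<in> SL2"
  by (simp add: SL2_iff conj_det)

lemma conj_inv_conj: assumes "g \<in> SL2" shows "conj (matrix_inv g) (conj g X) = X"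
proof -
  have "conj (matrix_inv g) (conj g X) = (matrix_inv g ** g) ** X ** (matrix_inv g ** matrix_inv (matrix_inv g))"
    unfolding conj_def by (simp add: matrix_mul_assoc)
  thus ?thesis using SL2_inv[OF assms] SL2_inv[OF SL2_inv(3)[OF assms]] by simp
qed

lemma comm_trace: assumes "X \<in> SL2" "Y \<in> SL2"
  shows "trace (commutator X Y) = (trace X)^2 + (trace Y)^2 + (trace (X ** Y))^2 - trace X * trace Y * trace (X ** Y) - 2"
proof -
  obtain a b c d where X: "X = mk a b c d" by (rule mat2_cases)
  obtain e f g h where Y: "Y = mk e f g h" by (rule mat2_cases)
  have d1: "a*d - b*c = 1" and d2: "e*h-f*g = 1" using assms X Y by (simp_all add: SL2_iff mk_det)
  show ?thesis unfolding commutator_def X Y using d1 d2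
    apply (simp add: mk_inv mk_mult mk_trace)
    by algebra
qed

lemma comm_det: assumes "X \<in> SL2" "Y \<in> SL2"
  shows "det (X ** Y - Y ** X) = 2 - trace (commutator X Y)"
proof -
  obtain a b c d where X: "X = mk a b c d" by (rule mat2_cases)
  obtain e f g h where Y: "Y = mk e f g h" by (rule mat2_cases)
  have d1: "a*d - b*c = 1" and d2: "e*h-f*g = 1" using assms X Y by (simp_all add: SL2_iff mk_det)
  show ?thesis unfolding commutator_def X Y using d1 d2
    apply (simp add: mk_inv mk_mult mk_trace mk_diff mk_det)
    by algebra
qed

definition JJ :: mat2 where "JJ = mk 0 1 (-1) 0"

lemma csqrt_sq: "csqrt z * csqrt z = z"
  by (metis power2_csqrt power2_eq_square)

lemma conj_to_J:
  assumes "- m1*m1 - m2*m3 = 1"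
  shows "\<exists>g\<in>SL2. JJ ** g = g ** mk m1 m2 m3 (-m1)"
proof -
  have "\<exists>p q. p*p*m2 - 2*p*q*m1 - q*q*m3 \<noteq> 0"
  proof (cases "m2 = 0")
    case False thus ?thesis by (intro exI[of _ 1] exI[of _ 0]) simp
  next
    case m2: True
    show ?thesis
    proof (cases "m3 = 0")
      case False thus ?thesis by (intro exI[of _ 0] exI[of _ 1]) simp
    next
      case True
      with m2 assms have "m1 \<noteq> 0" by auto
      thus ?thesis using m2 True by (intro exI[of _ 1] exI[of _ 1]) simp
    qed
  qed
  then obtain p q where pq: "p*p*m2 - 2*p*q*m1 - q*q*m3 \<noteq> 0" by blast
  define r where "r = p*m1 + q*m3"
  define u where "u = p*m2 - q*m1"
  define t where "t = csqrt (p*p*m2 - 2*p*q*m1 - q*q*m3)"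
  have t: "t * t = p*p*m2 - 2*p*q*m1 - q*q*m3" unfolding t_def by (rule csqrt_sq)
  hence t0: "t \<noteq> 0" using pq by auto
  define g where "g = mk (p/t) (q/t) (r/t) (u/t)"
  have "det g = (p*u - q*r)/(t*t)" unfolding g_def mk_det by (simp add: diff_divide_distrib)
  also have "p*u - q*r = t*t" unfolding t r_def u_def by (simp add: algebra_simps)
  finally have "g \<in> SL2" using t0 by (simp add: SL2_iff)
  moreover have "JJ ** g = g ** mk m1 m2 m3 (-m1)"
    unfolding JJ_def g_def mk_mult mk_eq r_def u_def using assms t0
    by (simp add: field_simps) algebra
  ultimately show ?thesis by blast
qed

lemma sym_from_J:
  assumes g: "g \<in> SL2" and gM: "JJ ** g = g ** M" and BM: "trace (B ** M) = 0"
  shows "transpose (conj g B) = conj g B"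
proof -
  have ig: "matrix_inv g ** JJ ** g = M"
    using gM SL2_inv[OF g] by (metis matrix_mul_assoc matrix_mul_lid)
  have "trace (conj g B ** JJ) = trace ((g ** B ** matrix_inv g) ** JJ)" by (simp add: conj_def)
  also have "\<dots> = trace (g ** (B ** matrix_inv g ** JJ))" by (simp add: matrix_mul_assoc)
  also have "\<dots> = trace ((B ** matrix_inv g ** JJ) ** g)" by (rule trace_mul_sym)
  also have "\<dots> = trace (B ** (matrix_inv g ** JJ ** g))" by (simp add: matrix_mul_assoc)
  also have "\<dots> = 0" using ig BM by simp
  finally have tr: "trace (conj g B ** JJ) = 0" .
  obtain y1 y2 y3 y4 where Y: "conj g B = mk y1 y2 y3 y4" by (rule mat2_cases)
  from tr have "y2 = y3" unfolding Y JJ_def by (simp add: mk_mult mk_trace)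
  thus ?thesis by (simp add: Y mk_transpose)
qed

lemma symmetrize:
  assumes B1: "B1 \<in> SL2" and B2: "B2 \<in> SL2" and k: "trace (commutator B1 B2) \<noteq> 2"
  shows "\<exists>g\<in>SL2. transpose (conj g B1) = conj g B1 \<and> transpose (conj g B2) = conj g B2"
proof -
  define K where "K = B1 ** B2 - B2 ** B1"
  have dK: "det K \<noteq> 0" using comm_det[OF B1 B2] k unfolding K_def by simp
  obtain a b c d where X: "B1 = mk a b c d" by (rule mat2_cases)
  obtain e f g h where Y: "B2 = mk e f g h" by (rule mat2_cases)
  obtain k1 k2 k3 k4 where Kk: "K = mk k1 k2 k3 k4" by (rule mat2_cases)
  have kk: "k1 = a * e + b * g - (e * a + f * c)" "k2 = a * f + b * h - (e * b + f * d)"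
     "k3 = c * e + d * g - (g * a + h * c)" "k4 = c * f + d * h - (g * b + h * d)"
    using Kk unfolding K_def X Y by (simp_all add: mk_mult mk_diff mk_eq)
  have k4: "k4 = -k1" using kk by algebra
  have t1: "trace (B1 ** K) = 0" and t2: "trace (B2 ** K) = 0"
    unfolding X Y Kk by (simp_all add: mk_mult mk_trace kk; algebra)+
  define \<sigma> where "\<sigma> = csqrt (det K)"
  have \<sigma>: "\<sigma> * \<sigma> = det K" unfolding \<sigma>_def by (rule csqrt_sq)
  hence s0: "\<sigma> \<noteq> 0" using dK by auto
  define M where "M = mk (k1/\<sigma>) (k2/\<sigma>) (k3/\<sigma>) (-(k1/\<sigma>))"
  have "- (k1/\<sigma>) * (k1/\<sigma>) - (k2/\<sigma>) * (k3/\<sigma>) = 1"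
    using \<sigma> s0 unfolding Kk mk_det k4 by (simp add: field_simps)
  then obtain G where G: "G \<in> SL2" "JJ ** G = G ** M" unfolding M_def using conj_to_J by blast
  have "trace (B1 ** M) = trace (B1 ** K) / \<sigma>" "trace (B2 ** M) = trace (B2 ** K) / \<sigma>"
    unfolding M_def Kk X Y k4 using s0 by (simp_all add: mk_mult mk_trace add_divide_distrib diff_divide_distrib)
  hence "trace (B1 ** M) = 0" "trace (B2 ** M) = 0" using t1 t2 by simp_all
  thus ?thesis using sym_from_J[OF G] G(1) by blast
qed



lemma mk_inv_gen: assumes "a*d - b*c \<noteq> 0"
  shows "mk a b c d ** matrix_inv (mk a b c d) = mat 1" "matrix_inv (mk a b c d) ** mk a b c d = mat 1"
proof -
  define D where "D = a*d - b*c"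
  have D0: "D \<noteq> 0" using assms D_def by simp
  let ?A = "mk a b c d" and ?B = "mk (d/D) (-b/D) (-c/D) (a/D)"
  have e: "a*(d/D) + b*(-c/D) = 1" "(d/D)*a + (-b/D)*c = 1"
      "c*(-b/D) + d*(a/D) = 1" "(-c/D)*b + (a/D)*d = 1" using D0
    by (simp_all add: field_simps; simp add: D_def algebra_simps)+
  have 1: "?A ** ?B = mat 1" "?B ** ?A = mat 1" 
    using e by (simp_all add: mk_mult mk_one mk_eq algebra_simps)
  hence "\<exists>A'. ?A ** A' = mat 1 \<and> A' ** ?A = mat 1" by blast
  hence "?A ** matrix_inv ?A = mat 1 \<and> matrix_inv ?A ** ?A = mat 1"
    unfolding matrix_inv_def by (rule someI_ex)
  thus "?A ** matrix_inv ?A = mat 1" "matrix_inv ?A ** ?A = mat 1" by auto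
qed

lemma det_inv: fixes P :: mat2 assumes "det P \<noteq> 0"
  shows "P ** matrix_inv P = mat 1" "matrix_inv P ** P = mat 1"
proof -
  obtain a b c d where P: "P = mk a b c d" by (rule mat2_cases)
  show "P ** matrix_inv P = mat 1" "matrix_inv P ** P = mat 1"
    using assms mk_inv_gen[of a d b c] unfolding P mk_det by auto
qed

lemma intertwine: assumes "h \<in> SL2" "h ** X = A ** h" shows "conj h X = A"
proof -
  have "conj h X = A ** (h ** matrix_inv h)" unfolding conj_def using assms(2)
    by (simp add: matrix_mul_assoc)
  thus ?thesis using SL2_inv[OF assms(1)] by simp
qed

lemma eigvec: fixes m1 m2 m3 m4 :: complex
  assumes "m1*m4 - m2*m3 = 0"
  shows "\<exists>e1 e2. (e1 \<noteq> 0 \<or> e2 \<noteq> 0) \<and> m1*e1 + m2*e2 = 0 \<and> m3*e1 + m4*e2 = 0"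
proof (cases "m1 = 0 \<and> m2 = 0")
  case T: True
  show ?thesis
  proof (cases "m3 = 0 \<and> m4 = 0")
    case True thus ?thesis using \<open>m1 = 0 \<and> m2 = 0\<close> by (intro exI[of _ 1] exI[of _ 0]) simp
  next
    case False thus ?thesis using T by (intro exI[of _ m4] exI[of _ "-m3"]) (auto simp: algebra_simps)
  qed
next
  case False thus ?thesis using assms by (intro exI[of _ m2] exI[of _ "-m1"]) (auto simp: algebra_simps)
qed

lemma normal_form:
  assumes X0: "X0 \<in> SL2" and X1: "X1 \<in> SL2" and k: "trace (commutator X0 X1) \<noteq> 2"
    and lam: "lam * lam - trace X0 * lam + 1 = 0"
  shows "\<exists>P. det P \<noteq> 0 \<and> X0 ** P = P ** mk lam (trace (X0 ** X1) - trace X0 * trace X1 + lam * trace X1) 0 (trace X0 - lam)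
              \<and> X1 ** P = P ** mk 0 (-1) 1 (trace X1)"
proof -
  obtain x1 x2 x3 x4 where X: "X0 = mk x1 x2 x3 x4" by (rule mat2_cases)
  obtain y1 y2 y3 y4 where Y: "X1 = mk y1 y2 y3 y4" by (rule mat2_cases)
  have d1: "x1*x4 - x2*x3 = 1" and d2: "y1*y4-y2*y3 = 1" using assms X Y by (simp_all add: SL2_iff mk_det)
  have "(x1 - lam)*(x4-lam) - x2*x3 = 0" using lam d1 unfolding X by (simp add: mk_trace) algebra
  then obtain e1 e2 where v: "e1 \<noteq> 0 \<or> e2 \<noteq> 0" "(x1 - lam)*e1 + x2*e2 = 0" "x3*e1 + (x4-lam)*e2 = 0"
    using eigvec by blast
  define w1 where "w1 = y1*e1 + y2*e2"
  define w2 where "w2 = y3*e1 + y4*e2"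
  define P where "P = mk e1 w1 e2 w2"
  have dL: "det (X0 ** X1 - X1 ** X0) \<noteq> 0" using comm_det[OF X0 X1] k by simp
  have "det P \<noteq> 0"
  proof
    assume dP: "det P = 0"
    hence dP': "e1*w2 = w1*e2" unfolding P_def mk_det by simp
    have ew: "x1*w1 + x2*w2 = lam*w1 \<and> x3*w1 + x4*w2 = lam*w2"
    proof (cases "e1 = 0")
      case False
      define mu where "mu = w1/e1"
      have "w1 = mu*e1" "w2 = mu*e2" using False dP' unfolding mu_def by (simp_all add: field_simps)
      thus ?thesis using v(2,3) by algebra
    next
      case True
      hence e2: "e2 \<noteq> 0" using v by simp
      define mu where "mu = w2/e2"
      have "w1 = mu*e1" "w2 = mu*e2" using True e2 dP' unfolding mu_def by (simp_all add: field_simps)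
      thus ?thesis using v(2,3) by algebra
    qed
    obtain l1 l2 l3 l4 where L: "X0 ** X1 - X1 ** X0 = mk l1 l2 l3 l4" by (rule mat2_cases)
    have ll: "l1 = x1 * y1 + x2 * y3 - (y1 * x1 + y2 * x3)" "l2 = x1 * y2 + x2 * y4 - (y1 * x2 + y2 * x4)"
       "l3 = x3 * y1 + x4 * y3 - (y3 * x1 + y4 * x3)" "l4 = x3 * y2 + x4 * y4 - (y3 * x2 + y4 * x4)"
      using L unfolding X Y by (simp_all add: mk_mult mk_diff mk_eq)
    have Lv: "l1*e1 + l2*e2 = 0" "l3*e1 + l4*e2 = 0"
      using ew v(2,3) unfolding ll w1_def w2_def by algebra+
    have "(l1*l4 - l2*l3) * e1 = 0" "(l1*l4 - l2*l3) * e2 = 0" using Lv by algebra+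
    hence "l1*l4 - l2*l3 = 0" using v(1) by auto
    thus False using dL L by (simp add: mk_det)
  qed
  moreover have "X0 ** P = P ** mk lam (trace (X0 ** X1) - trace X0 * trace X1 + lam * trace X1) 0 (trace X0 - lam)"
    unfolding X Y P_def using v(2,3) d1 d2
    apply (simp add: mk_mult mk_trace mk_eq w1_def w2_def)
    by algebra
  moreover have "X1 ** P = P ** mk 0 (-1) 1 (trace X1)"
    unfolding X Y P_def using v(2,3) d1 d2
    apply (simp add: mk_mult mk_trace mk_eq w1_def w2_def)
    by algebra
  ultimately show ?thesis by blast
qed

lemma scal_comm: "mk k 0 0 k ** (A::mat2) = A ** mk k 0 0 k"
  by (cases A rule: mat2_cases) (simp add: mk_mult mk_eq algebra_simps)

lemma inv_comm: fixes P :: mat2 assumes "det P \<noteq> 0" "X ** P = P ** N"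
  shows "matrix_inv P ** X = N ** matrix_inv P"
proof -
  have "matrix_inv P ** X = matrix_inv P ** X ** (P ** matrix_inv P)" using det_inv[OF assms(1)] by simp
  also have "\<dots> = matrix_inv P ** (X ** P) ** matrix_inv P" by (simp add: matrix_mul_assoc)
  also have "\<dots> = (matrix_inv P ** P) ** N ** matrix_inv P" using assms(2) by (simp add: matrix_mul_assoc)
  finally show ?thesis using det_inv[OF assms(1)] by simp
qed

lemma conj_pair:
  assumes X0: "X0 \<in> SL2" and X1: "X1 \<in> SL2" and A0: "A0 \<in> SL2" and A1: "A1 \<in> SL2"
    and t0: "trace X0 = trace A0" and t1: "trace X1 = trace A1" and t01: "trace (X0 ** X1) = trace (A0 ** A1)"
    and k: "trace (commutator X0 X1) \<noteq> 2"
  shows "\<exists>h\<in>SL2. conj h X0 = A0 \<and> conj h X1 = A1"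
proof -
  have kA: "trace (commutator A0 A1) \<noteq> 2" using k comm_trace[OF X0 X1] comm_trace[OF A0 A1] t0 t1 t01 by simp
  define a where "a = trace X0"
  define lam where "lam = (a + csqrt (a*a - 4))/2"
  have "csqrt (a*a - 4) * csqrt (a*a - 4) = a*a - 4" by (rule csqrt_sq)
  hence lam: "lam * lam - a * lam + 1 = 0" unfolding lam_def by (simp add: field_simps) algebra
  obtain P where P: "det P \<noteq> 0" "X0 ** P = P ** mk lam (trace (X0 ** X1) - trace X0 * trace X1 + lam * trace X1) 0 (trace X0 - lam)"
              "X1 ** P = P ** mk 0 (-1) 1 (trace X1)"
    using normal_form[OF X0 X1 k] lam unfolding a_def by blast
  obtain Q where Q: "det Q \<noteq> 0" "A0 ** Q = Q ** mk lam (trace (X0 ** X1) - trace X0 * trace X1 + lam * trace X1) 0 (trace X0 - lam)"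
              "A1 ** Q = Q ** mk 0 (-1) 1 (trace X1)"
    using normal_form[OF A0 A1 kA] lam unfolding a_def t0 t1 t01 by blast
  define h0 where "h0 = Q ** matrix_inv P"
  have h0X0: "h0 ** X0 = A0 ** h0" unfolding h0_def
    using inv_comm[OF P(1) P(2)] Q(2) by (metis matrix_mul_assoc)
  have h0X1: "h0 ** X1 = A1 ** h0" unfolding h0_def
    using inv_comm[OF P(1) P(3)] Q(3) by (metis matrix_mul_assoc)
  have "det P * det (matrix_inv P) = 1" using det_inv[OF P(1)] by (metis det_I det_mul)
  hence dh0: "det h0 \<noteq> 0" unfolding h0_def det_mul using Q(1) by auto
  define \<tau> where "\<tau> = csqrt (det h0)"
  have \<tau>: "\<tau> * \<tau> = det h0" unfolding \<tau>_def by (rule csqrt_sq)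
  hence t0': "\<tau> \<noteq> 0" using dh0 by auto
  define h where "h = mk (1/\<tau>) 0 0 (1/\<tau>) ** h0"
  have "det h = det h0 / (\<tau> * \<tau>)" unfolding h_def det_mul mk_det by simp
  hence hS: "h \<in> SL2" using \<tau> dh0 by (simp add: SL2_iff)
  have "h ** X0 = A0 ** h" unfolding h_def
    by (metis h0X0 matrix_mul_assoc scal_comm)
  moreover have "h ** X1 = A1 ** h" unfolding h_def
    by (metis h0X1 matrix_mul_assoc scal_comm)
  ultimately show ?thesis using hS intertwine by blast
qed

lemma sym_mk: fixes A :: mat2 assumes "transpose A = A" obtains p q r where "A = mk p q q r"
proof -
  have "A $ 2 $ 1 = transpose A $ 1 $ 2" by (simp add: transpose_def)
  also have "\<dots> = A $ 1 $ 2" using assms by simp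
  finally have "A = mk (A$1$1) (A$1$2) (A$1$2) (A$2$2)" using mat2_mk[of A] by simp
  thus ?thesis by (rule that)
qed

lemma delta_nz:
  assumes A0: "A0 \<in> SL2" and A1: "A1 \<in> SL2" and k: "trace (commutator A0 A1) \<noteq> 2"
    and "A0 = mk p q q r" "A1 = mk p' q' q' r'"
  shows "(p-r)*q' - (p'-r')*q \<noteq> 0"
proof
  assume h: "(p-r)*q' - (p'-r')*q = 0"
  have "A0 ** A1 - A1 ** A0 = mk 0 ((p-r)*q' - (p'-r')*q) (-((p-r)*q' - (p'-r')*q)) 0"
    unfolding assms(4,5) by (simp add: mk_mult mk_diff mk_eq algebra_simps)
  hence "det (A0 ** A1 - A1 ** A0) = ((p-r)*q' - (p'-r')*q)^2"
    by (simp add: mk_det power2_eq_square algebra_simps)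
  thus False using comm_det[OF A0 A1] k h by simp
qed

lemma solve_Y:
  assumes A0: "A0 \<in> SL2" and A1: "A1 \<in> SL2" and k: "trace (commutator A0 A1) \<noteq> 2"
    and s0: "transpose A0 = A0" and s1: "transpose A1 = A1"
  shows "\<exists>Y\<in>SL2. trace Y = x \<and> trace (A0 ** Y) = y \<and> trace (A1 ** Y) = z"
proof -
  obtain p q r where a0: "A0 = mk p q q r" using s0 by (rule sym_mk)
  obtain p' q' r' where a1: "A1 = mk p' q' q' r'" using s1 by (rule sym_mk)
  define \<delta> where "\<delta> = (p-r)*q' - (p'-r')*q"
  have d: "\<delta> \<noteq> 0" unfolding \<delta>_def by (rule delta_nz[OF A0 A1 k a0 a1])
  define cu where "cu = y - r*x"
  define cv where "cv = z - r'*x"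
  define y1 where "y1 = (cu*q' - cv*q)/\<delta>"
  define gx where "gx = ((p-r)*cv - (p'-r')*cu)/\<delta>"
  define y4 where "y4 = x - y1"
  define w where "w = csqrt (1 - y1*y4 + gx*gx/4)"
  have w: "w*w = 1 - y1*y4 + gx*gx/4" unfolding w_def by (rule csqrt_sq)
  define Y where "Y = mk y1 (gx/2 + w) (gx/2 - w) y4"
  have "(p-r)*y1 + q*gx = ((p-r)*(cu*q' - cv*q) + q*((p-r)*cv - (p'-r')*cu))/\<delta>"
    unfolding y1_def gx_def by (simp add: add_divide_distrib)
  also have "(p-r)*(cu*q' - cv*q) + q*((p-r)*cv - (p'-r')*cu) = cu*\<delta>" unfolding \<delta>_def by algebra
  finally have c1: "(p-r)*y1 + q*gx = cu" using d by simp
  have "(p'-r')*y1 + q'*gx = ((p'-r')*(cu*q' - cv*q) + q'*((p-r)*cv - (p'-r')*cu))/\<delta>"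
    unfolding y1_def gx_def by (simp add: add_divide_distrib)
  also have "(p'-r')*(cu*q' - cv*q) + q'*((p-r)*cv - (p'-r')*cu) = cv*\<delta>" unfolding \<delta>_def by algebra
  finally have c2: "(p'-r')*y1 + q'*gx = cv" using d by simp
  have "(gx/2 + w)*(gx/2 - w) = gx*gx/4 - w*w" by (simp add: algebra_simps)
  hence "det Y = 1" unfolding Y_def mk_det using w by simp
  moreover have "trace Y = x" unfolding Y_def mk_trace y4_def by simp
  moreover have "trace (A0 ** Y) = (p-r)*y1 + q*gx + r*x" unfolding Y_def a0 mk_mult mk_trace y4_def
    by (simp add: field_simps)
  hence "trace (A0 ** Y) = y" using c1 unfolding cu_def by simp
  moreover have "trace (A1 ** Y) = (p'-r')*y1 + q'*gx + r'*x" unfolding Y_def a1 mk_mult mk_trace y4_def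
    by (simp add: field_simps)
  hence "trace (A1 ** Y) = z" using c2 unfolding cv_def by simp
  ultimately show ?thesis by (auto simp: SL2_iff)
qed


lemma uniq_Y:
  assumes A0: "A0 \<in> SL2" and A1: "A1 \<in> SL2" and k: "trace (commutator A0 A1) \<noteq> 2"
    and s0: "transpose A0 = A0" and s1: "transpose A1 = A1"
    and Y: "Y \<in> SL2" and Z: "Z \<in> SL2" and t: "trace Y = trace Z"
    and t0: "trace (A0 ** Y) = trace (A0 ** Z)" and t1: "trace (A1 ** Y) = trace (A1 ** Z)"
  shows "Y = Z \<or> Y = transpose Z"
proof -
  obtain p q r where a0: "A0 = mk p q q r" using s0 by (rule sym_mk)
  obtain p' q' r' where a1: "A1 = mk p' q' q' r'" using s1 by (rule sym_mk)
  define \<delta> where "\<delta> = (p-r)*q' - (p'-r')*q"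
  have d: "\<delta> \<noteq> 0" unfolding \<delta>_def by (rule delta_nz[OF A0 A1 k a0 a1])
  obtain y1 y2 y3 y4 where y: "Y = mk y1 y2 y3 y4" by (rule mat2_cases)
  obtain z1 z2 z3 z4 where zz: "Z = mk z1 z2 z3 z4" by (rule mat2_cases)
  have e1: "y1 + y4 = z1 + z4" using t unfolding y zz mk_trace .
  have e2: "p*y1 + q*y3 + (q*y2 + r*y4) = p*z1 + q*z3 + (q*z2 + r*z4)"
    using t0 unfolding y zz a0 mk_mult mk_trace .
  have e3: "p'*y1 + q'*y3 + (q'*y2 + r'*y4) = p'*z1 + q'*z3 + (q'*z2 + r'*z4)"
    using t1 unfolding y zz a1 mk_mult mk_trace .
  have "\<delta> * (y1 - z1) = 0" unfolding \<delta>_def using e1 e2 e3 by algebra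
  hence f1: "y1 = z1" using d by simp
  have "\<delta> * (y2 + y3 - z2 - z3) = 0" unfolding \<delta>_def using e1 e2 e3 by algebra
  hence "y2 + y3 - z2 - z3 = 0" using d by simp
  hence f2: "y2 + y3 = z2 + z3" by (simp add: algebra_simps)
  have f4: "y4 = z4" using e1 f1 by simp
  have "y1*y4 - y2*y3 = z1*z4 - z2*z3" using Y Z unfolding y zz SL2_iff mk_det by simp
  hence "y2 * y3 = z2 * z3" using f1 f4 by simp
  hence "(y2 - z2) * (y2 - z3) = 0" using f2 by algebra
  hence "y2 = z2 \<or> y2 = z3" by simp
  thus ?thesis using f1 f2 f4 unfolding y zz mk_transpose mk_eq by auto
qed

lemma concat_map_eq_iff:
  "(\<forall>x\<in>set xs. length (f x) = length (g x)) \<Longrightarrow>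
   concat (map f xs) = concat (map g xs) \<longleftrightarrow> (\<forall>x\<in>set xs. f x = g x)"
  by (induction xs) auto

lemma split_s: "length s = 3*m \<Longrightarrow> s = concat (map (\<lambda>i. [s!(3*i), s!(3*i+1), s!(3*i+2)]) [0..<m])"
proof (induction m arbitrary: s)
  case 0 thus ?case by simp
next
  case (Suc m)
  obtain a b c t where s: "s = a # b # c # t"
    using Suc.prems by (metis length_0_conv length_Suc_conv mult_Suc_right numeral_3_eq_3 add_Suc)
  have lt: "length t = 3*m" using Suc.prems s by simp
  have "t = concat (map (\<lambda>i. [t!(3*i), t!(3*i+1), t!(3*i+2)]) [0..<m])" using Suc.IH[OF lt] .
  moreover have "[0..<Suc m] = 0 # map Suc [0..<m]" by (simp add: map_Suc_upt upt_conv_Cons)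
  moreover have "\<And>i. s!(3*Suc i) = t!(3*i) \<and> s!(3*Suc i+1) = t!(3*i+1) \<and> s!(3*Suc i+2) = t!(3*i+2)"
    by (simp add: s numeral_3_eq_3)
  ultimately show ?case by (simp add: s comp_def)
qed

lemma reindex2: "2 \<le> n \<Longrightarrow> concat (map f [2..<n]) = concat (map (\<lambda>i. f (i+2)) [0..<n-2])"
proof -
  assume "2 \<le> n"
  hence e: "n - 2 + 2 = n" by simp
  have "[2..<n] = map (\<lambda>i. i + 2) [0..<n-2]" by (metis e map_add_upt)
  thus ?thesis by (simp add: comp_def)
qed

lemma mt_eq_iff: assumes "length X = length A"
  shows "magnus_trace X = magnus_trace A \<longleftrightarrow>
    (trace (X!0) = trace (A!0) \<and> trace (X!1) = trace (A!1) \<and> trace (X!0 ** X!1) = trace (A!0 ** A!1) \<and>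
     (\<forall>k\<in>{2..<length A}. trace (X!k) = trace (A!k) \<and> trace (X!0 ** X!k) = trace (A!0 ** A!k)
        \<and> trace (X!1 ** X!k) = trace (A!1 ** A!k)))"
proof -
  define F where "F = (\<lambda>k. [trace (X!k), trace (X!0 ** X!k), trace (X!1 ** X!k)])"
  define G where "G = (\<lambda>k. [trace (A!k), trace (A!0 ** A!k), trace (A!1 ** A!k)])"
  have "concat (map F [2..<length A]) = concat (map G [2..<length A]) \<longleftrightarrow> (\<forall>k\<in>set [2..<length A]. F k = G k)"
    by (rule concat_map_eq_iff) (simp add: F_def G_def)
  thus ?thesis unfolding magnus_trace_def assms F_def G_def by auto
qed

lemma trace_transpose: "trace (transpose (B::mat2)) = trace B"
  by (cases B rule: mat2_cases) (simp add: mk_transpose mk_trace)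

lemma det_transpose2: "det (transpose (B::mat2)) = det B"
  by (cases B rule: mat2_cases) (simp add: mk_transpose mk_det)

lemma trace_sym_transpose: fixes A0 B :: mat2 assumes "transpose A0 = A0"
  shows "trace (A0 ** transpose B) = trace (A0 ** B)"
proof -
  obtain p q r where a: "A0 = mk p q q r" using assms by (rule sym_mk)
  show ?thesis by (cases B rule: mat2_cases) (simp add: a mk_transpose mk_mult mk_trace algebra_simps)
qed

lemma comm_conj: assumes "g \<in> SL2" "B1 \<in> SL2" "B2 \<in> SL2"
  shows "trace (commutator (conj g B1) (conj g B2)) = trace (commutator B1 B2)"
  using comm_trace[OF assms(2,3)] comm_trace[OF conj_SL2[OF assms(1,2)] conj_SL2[OF assms(1,3)]]
  by (simp add: conj_trace[OF assms(1)] conj_mult[OF assms(1)])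

lemma existence_part:
  assumes A1: "A1 \<in> SL2" and A2: "A2 \<in> SL2" and k: "trace (commutator A1 A2) \<noteq> 2"
    and s1: "transpose A1 = A1" and s2: "transpose A2 = A2"
    and n: "n \<ge> 3" and ls: "length s = 3 * n - 6"
  shows "\<exists>As. length As = n - 2 \<and> set As \<subseteq> SL2 \<and>
           magnus_trace ([A1, A2] @ As) = [trace A1, trace A2, trace (A1 ** A2)] @ s"
proof -
  have "\<forall>i. \<exists>Y. Y \<in> SL2 \<and> trace Y = s!(3*i) \<and> trace (A1 ** Y) = s!(3*i+1) \<and> trace (A2 ** Y) = s!(3*i+2)"
    using solve_Y[OF A1 A2 k s1 s2] by blast
  then obtain G where G: "\<And>i. G i \<in> SL2 \<and> trace (G i) = s!(3*i) \<and> trace (A1 ** G i) = s!(3*i+1) \<and> trace (A2 ** G i) = s!(3*i+2)"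
    by metis
  define As where "As = map G [0..<n-2]"
  have len: "length As = n - 2" unfolding As_def by simp
  moreover have "set As \<subseteq> SL2" unfolding As_def using G by auto
  moreover have "magnus_trace ([A1, A2] @ As) = [trace A1, trace A2, trace (A1 ** A2)] @ s"
  proof -
    define L where "L = [A1, A2] @ As"
    have lL: "length L = n" using len n by (simp add: L_def)
    have nth: "\<And>k. k \<in> {2..<n} \<Longrightarrow> L ! k = G (k - 2)"
      unfolding As_def L_def using n by (auto simp: nth_append numeral_2_eq_2)
    have L01: "L!0 = A1" "L!1 = A2" "L!Suc 0 = A2" by (simp_all add: L_def)
    have "concat (map (\<lambda>k. [trace (L!k), trace (L!0 ** L!k), trace (L!1 ** L!k)]) [2..<n])
        = concat (map (\<lambda>k. [trace (G (k-2)), trace (A1 ** G (k-2)), trace (A2 ** G (k-2))]) [2..<n])"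
      by (rule arg_cong[where f=concat], rule map_cong) (auto simp: nth L01)
    also have "\<dots> = concat (map (\<lambda>i. [trace (G i), trace (A1 ** G i), trace (A2 ** G i)]) [0..<n-2])"
      by (subst reindex2[of n]) (use n in auto)
    also have "\<dots> = concat (map (\<lambda>i. [s!(3*i), s!(3*i+1), s!(3*i+2)]) [0..<n-2])"
      using G by simp
    also have "\<dots> = s" using split_s[of s "n-2"] ls by simp
    finally show ?thesis unfolding magnus_trace_def L_def[symmetric] lL by (simp add: L01)
  qed
  ultimately show ?thesis by blast
qed

lemma preimage_part:
  assumes n: "n \<ge> 3" and A: "A \<in> tuples n" and mt: "magnus_trace A = R"
    and k: "trace (commutator (A!0) (A!1)) \<noteq> 2"
    and s0: "transpose (A!0) = A!0" and s1: "transpose (A!1) = A!1"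
    and S: "S = {C. length C = n \<and> C!0 = A!0 \<and> C!1 = A!1 \<and>
                 (\<forall>j\<in>{2..<n}. C!j = A!j \<or> C!j = transpose (A!j))}"
  shows "finite S \<and> {X\<in>tuples n. magnus_trace X = R} = {conj_tuple h C | h C. h \<in> SL2 \<and> C \<in> S}"
proof -
  have lA: "length A = n" and SA': "set A \<subseteq> SL2" using A by (auto simp: tuples_def)
  have SA: "\<And>j. j < n \<Longrightarrow> A!j \<in> SL2" using SA' lA nth_mem by blast
  have A0: "A!0 \<in> SL2" and A1: "A!1 \<in> SL2" using SA n by auto
  have Sel: "\<And>C j. C \<in> S \<Longrightarrow> j < n \<Longrightarrow> C!j = A!j \<or> C!j = transpose (A!j)"
  proof -
    fix C j assume C: "C \<in> S" and j: "j < n"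
    show "C!j = A!j \<or> C!j = transpose (A!j)"
    proof (cases "j < 2")
      case True hence "j = 0 \<or> j = 1" by auto
      thus ?thesis using C S by auto
    next
      case False thus ?thesis using C S j by auto
    qed
  qed
  have SSL: "\<And>C j. C \<in> S \<Longrightarrow> j < n \<Longrightarrow> C!j \<in> SL2"
    using Sel SA det_transpose2 by (metis SL2_iff)
  have lS: "\<And>C. C \<in> S \<Longrightarrow> length C = n" using S by auto
  have "S \<subseteq> {C. set C \<subseteq> set A \<union> transpose ` set A \<and> length C = n}"
  proof
    fix C assume C: "C \<in> S"
    have "set C \<subseteq> set A \<union> transpose ` set A"
    proof
      fix x assume "x \<in> set C"
      then obtain j where j: "j < length C" "x = C!j" by (auto simp: in_set_conv_nth)
      hence jn: "j < n" using lS[OF C] by simp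
      have "A!j \<in> set A" using jn lA by simp
      thus "x \<in> set A \<union> transpose ` set A" using Sel[OF C jn] j by auto
    qed
    thus "C \<in> {C. set C \<subseteq> set A \<union> transpose ` set A \<and> length C = n}" using lS[OF C] by simp
  qed
  hence fin: "finite S" by (rule finite_subset) (simp add: finite_lists_length_eq)
  have "{X\<in>tuples n. magnus_trace X = R} \<subseteq> {conj_tuple h C | h C. h \<in> SL2 \<and> C \<in> S}"
  proof
    fix X assume "X \<in> {X\<in>tuples n. magnus_trace X = R}"
    hence X: "X \<in> tuples n" and mX: "magnus_trace X = magnus_trace A" using mt by auto
    have lX: "length X = n" and SX': "set X \<subseteq> SL2" using X by (auto simp: tuples_def)
    have SX: "\<And>j. j < n \<Longrightarrow> X!j \<in> SL2" using SX' lX nth_mem by blast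
    have X0: "X!0 \<in> SL2" and X1: "X!1 \<in> SL2" using SX n by auto
    have tr: "trace (X!0) = trace (A!0)" "trace (X!1) = trace (A!1)" "trace (X!0 ** X!1) = trace (A!0 ** A!1)"
      and trk: "\<And>j. j \<in> {2..<n} \<Longrightarrow> trace (X!j) = trace (A!j) \<and> trace (X!0 ** X!j) = trace (A!0 ** A!j)
        \<and> trace (X!1 ** X!j) = trace (A!1 ** A!j)"
      using mX mt_eq_iff[of X A] lX lA by auto
    have kX: "trace (commutator (X!0) (X!1)) \<noteq> 2"
      using k comm_trace[OF X0 X1] comm_trace[OF A0 A1] tr by simp
    obtain h where h: "h \<in> SL2" "conj h (X!0) = A!0" "conj h (X!1) = A!1"
      using conj_pair[OF X0 X1 A0 A1 tr kX] by blast
    define C where "C = map (conj h) X"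
    have "C \<in> S"
    proof -
      have "C!j = A!j \<or> C!j = transpose (A!j)" if j: "j \<in> {2..<n}" for j
      proof -
        have jn: "j < n" using j by simp
        have Cj: "C!j = conj h (X!j)" using jn lX by (simp add: C_def)
        show ?thesis unfolding Cj
        proof (rule uniq_Y[OF A0 A1 k s0 s1 conj_SL2[OF h(1) SX[OF jn]] SA[OF jn]])
          show "trace (conj h (X!j)) = trace (A!j)" using trk[OF j] conj_trace[OF h(1)] by simp
          have "trace (A!0 ** conj h (X!j)) = trace (conj h (X!0 ** X!j))"
            using h(2) conj_mult[OF h(1)] by metis
          thus "trace (A!0 ** conj h (X!j)) = trace (A!0 ** A!j)" using trk[OF j] conj_trace[OF h(1)] by simp
          have "trace (A!1 ** conj h (X!j)) = trace (conj h (X!1 ** X!j))"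
            using h(3) conj_mult[OF h(1)] by metis
          thus "trace (A!1 ** conj h (X!j)) = trace (A!1 ** A!j)" using trk[OF j] conj_trace[OF h(1)] by simp
        qed
      qed
      moreover have "C!0 = A!0" "C!1 = A!1" using h n lX by (simp_all add: C_def)
      moreover have "length C = n" using lX by (simp add: C_def)
      ultimately show ?thesis unfolding S by blast
    qed
    moreover have "X = conj_tuple (matrix_inv h) C"
      unfolding conj_tuple_def C_def by (simp add: comp_def conj_inv_conj[OF h(1)])
    moreover have "matrix_inv h \<in> SL2" using SL2_inv[OF h(1)] by simp
    ultimately show "X \<in> {conj_tuple h C | h C. h \<in> SL2 \<and> C \<in> S}" by blast
  qed
  moreover have "{conj_tuple h C | h C. h \<in> SL2 \<and> C \<in> S} \<subseteq> {X\<in>tuples n. magnus_trace X = R}"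
  proof
    fix X assume "X \<in> {conj_tuple h C | h C. h \<in> SL2 \<and> C \<in> S}"
    then obtain h C where X: "X = conj_tuple h C" and h: "h \<in> SL2" and C: "C \<in> S" by blast
    have lC: "length C = n" using lS[OF C] .
    have lX: "length X = n" using lC X by (simp add: conj_tuple_def)
    have Xj: "\<And>j. j < n \<Longrightarrow> X!j = conj h (C!j)" using X lC by (simp add: conj_tuple_def)
    have "set X \<subseteq> SL2"
    proof
      fix x assume "x \<in> set X"
      then obtain j where j: "j < n" "x = X!j" using lX by (auto simp: in_set_conv_nth)
      thus "x \<in> SL2" using Xj[OF j(1)] conj_SL2[OF h SSL[OF C j(1)]] by simp
    qed
    hence XT: "X \<in> tuples n" using lX by (simp add: tuples_def)
    have C0: "C!0 = A!0" and C1: "C!1 = A!1" using C S by auto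
    have n0: "0 < n" "1 < n" using n by auto
    have "magnus_trace X = magnus_trace A"
    proof (subst mt_eq_iff)
      show "length X = length A" using lX lA by simp
      have t01: "trace (X!0) = trace (A!0)" "trace (X!1) = trace (A!1)" "trace (X!0 ** X!1) = trace (A!0 ** A!1)"
        using Xj[OF n0(1)] Xj[OF n0(2)] C0 C1 conj_trace[OF h] conj_mult[OF h] by simp_all
      have "trace (X!j) = trace (A!j) \<and> trace (X!0 ** X!j) = trace (A!0 ** A!j)
        \<and> trace (X!1 ** X!j) = trace (A!1 ** A!j)" if j: "j \<in> {2..<n}" for j
      proof -
        have jn: "j < n" using j by simp
        have e: "trace (X!j) = trace (C!j)" "trace (X!0 ** X!j) = trace (A!0 ** C!j)"
          "trace (X!1 ** X!j) = trace (A!1 ** C!j)"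
          using Xj[OF jn] Xj[OF n0(1)] Xj[OF n0(2)] C0 C1 conj_trace[OF h] conj_mult[OF h] by simp_all
        from Sel[OF C jn] show ?thesis
        proof
          assume "C!j = A!j" thus ?thesis using e by simp
        next
          assume "C!j = transpose (A!j)"
          thus ?thesis using e trace_transpose trace_sym_transpose[OF s0] trace_sym_transpose[OF s1] by simp
        qed
      qed
      thus "trace (X!0) = trace (A!0) \<and> trace (X!1) = trace (A!1) \<and> trace (X!0 ** X!1) = trace (A!0 ** A!1) \<and>
        (\<forall>k\<in>{2..<length A}. trace (X!k) = trace (A!k) \<and> trace (X!0 ** X!k) = trace (A!0 ** A!k)
        \<and> trace (X!1 ** X!k) = trace (A!1 ** A!k))" using t01 lA by blast
    qed
    thus "X \<in> {X\<in>tuples n. magnus_trace X = R}" using XT mt by simp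
  qed
  ultimately show ?thesis using fin by blast
qed

theorem theorem1p3:
  fixes B1 B2 :: mat2
  assumes "B1 \<in> SL2" and "B2 \<in> SL2"
    and "trace (commutator B1 B2) \<noteq> 2"
  shows "(\<exists>g\<in>SL2. transpose (conj g B1) = conj g B1 \<and> transpose (conj g B2) = conj g B2)
    \<and> (\<forall>g\<in>SL2. transpose (conj g B1) = conj g B1 \<and> transpose (conj g B2) = conj g B2 \<longrightarrow>
         (let A1 = conj g B1; A2 = conj g B2;
              r = [trace A1, trace A2, trace (A1 ** A2)]
          in \<forall>n\<ge>3. \<forall>s::complex list. length s = 3 * n - 6 \<longrightarrow>
               (\<exists>As. length As = n - 2 \<and> set As \<subseteq> SL2 \<and>
                     magnus_trace ([A1, A2] @ As) = r @ s)
             \<and> (\<forall>A\<in>tuples n.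
                   magnus_trace A = r @ s \<and> trace (commutator (A!0) (A!1)) \<noteq> 2
                   \<and> transpose (A!0) = A!0 \<and> transpose (A!1) = A!1 \<longrightarrow>
                   (let S = {C. length C = n \<and> C!0 = A!0 \<and> C!1 = A!1 \<and>
                               (\<forall>j\<in>{2..<n}. C!j = A!j \<or> C!j = transpose (A!j))}
                    in finite S \<and>
                       {X\<in>tuples n. magnus_trace X = r @ s} =
                       {conj_tuple h C | h C. h \<in> SL2 \<and> C \<in> S}))))"
proof (intro conjI ballI impI)
  show "\<exists>g\<in>SL2. transpose (conj g B1) = conj g B1 \<and> transpose (conj g B2) = conj g B2"
    by (rule symmetrize[OF assms])
next
  fix g assume g: "g \<in> SL2" and sy: "transpose (conj g B1) = conj g B1 \<and> transpose (conj g B2) = conj g B2"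
  define A1 where "A1 = conj g B1"
  define A2 where "A2 = conj g B2"
  have A1: "A1 \<in> SL2" and A2: "A2 \<in> SL2" unfolding A1_def A2_def using conj_SL2 g assms by auto
  have kA: "trace (commutator A1 A2) \<noteq> 2" unfolding A1_def A2_def using comm_conj[OF g assms(1,2)] assms(3) by simp
  have s1: "transpose A1 = A1" and s2: "transpose A2 = A2" using sy unfolding A1_def A2_def by auto
  show "let A1 = conj g B1; A2 = conj g B2;
              r = [trace A1, trace A2, trace (A1 ** A2)]
          in \<forall>n\<ge>3. \<forall>s::complex list. length s = 3 * n - 6 \<longrightarrow>
               (\<exists>As. length As = n - 2 \<and> set As \<subseteq> SL2 \<and>
                     magnus_trace ([A1, A2] @ As) = r @ s)
             \<and> (\<forall>A\<in>tuples n.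
                   magnus_trace A = r @ s \<and> trace (commutator (A!0) (A!1)) \<noteq> 2
                   \<and> transpose (A!0) = A!0 \<and> transpose (A!1) = A!1 \<longrightarrow>
                   (let S = {C. length C = n \<and> C!0 = A!0 \<and> C!1 = A!1 \<and>
                               (\<forall>j\<in>{2..<n}. C!j = A!j \<or> C!j = transpose (A!j))}
                    in finite S \<and>
                       {X\<in>tuples n. magnus_trace X = r @ s} =
                       {conj_tuple h C | h C. h \<in> SL2 \<and> C \<in> S}))"
    unfolding Let_def A1_def[symmetric] A2_def[symmetric]
  proof (intro allI impI conjI ballI)
    fix n :: nat and s :: "complex list"
    assume n: "3 \<le> n" and ls: "length s = 3 * n - 6"
    show "\<exists>As. length As = n - 2 \<and> set As \<subseteq> SL2 \<and>
            magnus_trace ([A1, A2] @ As) = [trace A1, trace A2, trace (A1 ** A2)] @ s"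
      by (rule existence_part[OF A1 A2 kA s1 s2 n ls])
  next
    fix n :: nat and s :: "complex list" and A
    assume n: "3 \<le> n" and A: "A \<in> tuples n"
      and h: "magnus_trace A = [trace A1, trace A2, trace (A1 ** A2)] @ s \<and> trace (commutator (A!0) (A!1)) \<noteq> 2
                   \<and> transpose (A!0) = A!0 \<and> transpose (A!1) = A!1"
    note P = preimage_part[OF n A _ _ _ _ refl, of "[trace A1, trace A2, trace (A1 ** A2)] @ s"]
    show "finite {C. length C = n \<and> C!0 = A!0 \<and> C!1 = A!1 \<and>
                               (\<forall>j\<in>{2..<n}. C!j = A!j \<or> C!j = transpose (A!j))}"
      using P h by blast
    show "{X\<in>tuples n. magnus_trace X = [trace A1, trace A2, trace (A1 ** A2)] @ s} =
          {conj_tuple h C | h C. h \<in> SL2 \<and> C \<in> {C. length C = n \<and> C!0 = A!0 \<and> C!1 = A!1 \<and>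
                               (\<forall>j\<in>{2..<n}. C!j = A!j \<or> C!j = transpose (A!j))}}"
      using P h by blast
  qed
qed

end
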